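(* Let $\mathbf{X}\subseteq\mathbb{N}^n$ be hybridlinear. The following are equivalent: (1) $\mathbf{X}$ is directed hybridlinear; (2) there is a representation $\mathbf{X}=\{\mathbf{b}_1,\dots,\mathbf{b}_r\}+\mathbb{N}(\mathbf{F})$ with $(\mathbf{b}_i+\mathbb{N}(\mathbf{F}))\cap(\mathbf{b}_j+\mathbb{N}(\mathbf{F}))\neq\emptyset$ for all $1\le i,j\le r$; (3) there is a representation $\mathbf{X}=\{\mathbf{b}_1,\dots,\mathbf{b}_r\}+\mathbb{N}(\mathbf{F})$ with $\mathbf{b}_i-\mathbf{b}_j\in\mathbb{Z}(\mathbf{F})$ for all $1\le i,j\le r$.
   Context: Hybridlinear: $\mathbf{B}+\mathbb{N}(\mathbf{F})$ with $\mathbf{B},\mathbf{F}\subseteq\mathbb{N}^n$ finite; $\mathbb{Z}(\mathbf{F})$ is the set of integer linear combinations of $\mathbf{F}$. Preservants: $\mathbf{P}_{\mathbf{X}}=\{\mathbf{p}\in\mathbb{Z}^n\mid\mathbf{X}+\mathbf{p}\subseteq\mathbf{X}\}$; $\mathbf{x}\le_{\mathbf{P}}\mathbf{y}$ iff $\mathbf{y}-\mathbf{x}\in\mathbf{P}$. A well-quasi-order $(\mathbf{X},\le)$ is directed if any two elements have a common upper bound in $\mathbf{X}$. $\mathbf{X}$ is directed hybridlinear if $(\mathbf{X},\le_{\mathbf{P}_{\mathbf{X}}})$ is a directed well-quasi-order (well-founded, every subset has finitely many minimal elements). *)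

theory Defs
  imports "HOL-Analysis.Finite_Cartesian_Product"
begin

text \<open>Vectors of Z^n are modelled as int ^ 'n for a finite index type 'n (n = CARD('n)).
  N^n is the set of vectors with nonnegative entries.\<close>

definition natvecs :: "(int ^ 'n::finite) set" where
  "natvecs = {x. \<forall>i. 0 \<le> x $ i}"

definition smul :: "int \<Rightarrow> int ^ 'n::finite \<Rightarrow> int ^ 'n" where
  "smul c v = (\<chi> i. c * v $ i)"

definition Nspan :: "(int ^ 'n::finite) set \<Rightarrow> (int ^ 'n) set" where
  "Nspan F = {(\<Sum>f\<in>F. smul (int (c f)) f) | c. True}"

definition Zspan :: "(int ^ 'n::finite) set \<Rightarrow> (int ^ 'n) set" where
  "Zspan F = {(\<Sum>f\<in>F. smul (c f) f) | c. True}"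

definition msum :: "(int ^ 'n::finite) set \<Rightarrow> (int ^ 'n) set \<Rightarrow> (int ^ 'n) set" where
  "msum A C = {a + c | a c. a \<in> A \<and> c \<in> C}"

definition hybridlinear :: "(int ^ 'n::finite) set \<Rightarrow> bool" where
  "hybridlinear X \<longleftrightarrow> (\<exists>B F. finite B \<and> finite F \<and> B \<subseteq> natvecs \<and> F \<subseteq> natvecs
      \<and> X = msum B (Nspan F))"

definition preservants :: "(int ^ 'n::finite) set \<Rightarrow> (int ^ 'n) set" where
  "preservants X = {p. \<forall>x\<in>X. x + p \<in> X}"

definition leP :: "(int ^ 'n::finite) set \<Rightarrow> int ^ 'n \<Rightarrow> int ^ 'n \<Rightarrow> bool" where
  "leP P x y \<longleftrightarrow> y - x \<in> P"

definition directed_wqo_on :: "'a set \<Rightarrow> ('a \<Rightarrow> 'a \<Rightarrow> bool) \<Rightarrow> bool" where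
  "directed_wqo_on X le \<longleftrightarrow>
     wf {(x, y). x \<in> X \<and> y \<in> X \<and> le x y \<and> \<not> le y x}
   \<and> (\<forall>S \<subseteq> X. finite {m \<in> S. \<forall>y\<in>S. le y m \<longrightarrow> le m y})
   \<and> (\<forall>x\<in>X. \<forall>y\<in>X. \<exists>z\<in>X. le x z \<and> le y z)"

definition directed_hybridlinear :: "(int ^ 'n::finite) set \<Rightarrow> bool" where
  "directed_hybridlinear X \<longleftrightarrow> directed_wqo_on X (leP (preservants X))"

end

theory Submission
  imports Defs "HOL-Library.Infinite_Set"
begin

lemma smul_add: "smul (a + b) v = smul a v + smul b v"
  unfolding smul_def by (simp add: vec_eq_iff algebra_simps)
lemma smul_diff: "smul (a - b) v = smul a v - smul b v"
  unfolding smul_def by (simp add: vec_eq_iff algebra_simps)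
lemma smul_0[simp]: "smul 0 v = 0"
  unfolding smul_def by (simp add: vec_eq_iff)
lemma smul_1[simp]: "smul 1 v = v"
  unfolding smul_def by (simp add: vec_eq_iff)
lemma smul_nth[simp]: "smul c v $ i = c * v $ i"
  unfolding smul_def by simp

lemma NspanI: "(\<Sum>f\<in>F. smul (int (c f)) f) \<in> Nspan F"
  unfolding Nspan_def by blast
lemma ZspanI: "(\<Sum>f\<in>F. smul (c f) f) \<in> Zspan F"
  unfolding Zspan_def by blast

lemma Nspan_0: "0 \<in> Nspan F"
  unfolding Nspan_def by (rule CollectI, rule exI[of _ "\<lambda>_. 0"]) simp

lemma Nspan_add: "u \<in> Nspan F \<Longrightarrow> v \<in> Nspan F \<Longrightarrow> u + v \<in> Nspan F"
proof -
  assume "u \<in> Nspan F" "v \<in> Nspan F"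
  then obtain c d where u: "u = (\<Sum>f\<in>F. smul (int (c f)) f)" and v: "v = (\<Sum>f\<in>F. smul (int (d f)) f)"
    unfolding Nspan_def by auto
  have "u + v = (\<Sum>f\<in>F. smul (int ((\<lambda>f. c f + d f) f)) f)"
    unfolding u v sum.distrib[symmetric] by (simp add: smul_add)
  then show ?thesis using NspanI[where F=F and c="\<lambda>f. c f + d f"] by simp
qed

lemma Nspan_Zspan: "u \<in> Nspan F \<Longrightarrow> u \<in> Zspan F"
  unfolding Nspan_def Zspan_def by auto

lemma Zspan_diff: "u \<in> Zspan F \<Longrightarrow> v \<in> Zspan F \<Longrightarrow> u - v \<in> Zspan F"
proof -
  assume "u \<in> Zspan F" "v \<in> Zspan F"
  then obtain c d where u: "u = (\<Sum>f\<in>F. smul (c f) f)" and v: "v = (\<Sum>f\<in>F. smul (d f) f)"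
    unfolding Zspan_def by auto
  have "u - v = (\<Sum>f\<in>F. smul ((\<lambda>f. c f - d f) f) f)"
    unfolding u v sum_subtractf[symmetric] by (simp add: smul_diff)
  then show ?thesis using ZspanI[where F=F and c="\<lambda>f. c f - d f"] by simp
qed

lemma Zspan_mem: "finite F \<Longrightarrow> u \<in> F \<Longrightarrow> u \<in> Zspan F"
proof -
  assume "finite F" "u \<in> F"
  have "(\<Sum>f\<in>F. smul ((\<lambda>f. if f = u then 1 else 0) f) f) = (\<Sum>f\<in>F. if f = u then u else 0)"
    by (rule sum.cong) auto
  also have "\<dots> = u" using \<open>finite F\<close> \<open>u \<in> F\<close> by simp
  finally show ?thesis using ZspanI[where F=F and c="\<lambda>f. if f = u then 1 else 0"] by simp
qed

lemma Zspan_split: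
  assumes "w \<in> Zspan F"
  shows "\<exists>a d. a \<in> Nspan F \<and> d \<in> Nspan F \<and> w = a - d"
proof -
  obtain c where w: "w = (\<Sum>f\<in>F. smul (c f) f)" using assms unfolding Zspan_def by auto
  let ?a = "\<Sum>f\<in>F. smul (int (nat (c f))) f"
  let ?d = "\<Sum>f\<in>F. smul (int (nat (- c f))) f"
  have "w = ?a - ?d"
    unfolding w sum_subtractf[symmetric] smul_diff[symmetric]
    by (rule sum.cong) (auto intro: arg_cong[where f="\<lambda>x. smul x _"])
  moreover have "?a \<in> Nspan F" "?d \<in> Nspan F" by (rule NspanI)+
  ultimately show ?thesis by blast
qed

lemma msum_iff: "x \<in> msum B C \<longleftrightarrow> (\<exists>b\<in>B. \<exists>c\<in>C. x = b + c)"
  unfolding msum_def by auto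

lemma Nspan_natvecs:
  assumes "F \<subseteq> natvecs" "v \<in> Nspan F" shows "v \<in> natvecs"
proof -
  obtain c where v: "v = (\<Sum>f\<in>F. smul (int (c f)) f)" using assms unfolding Nspan_def by auto
  show ?thesis using assms(1) unfolding v natvecs_def by (auto intro!: sum_nonneg)
qed

lemma msum_natvecs:
  assumes "B \<subseteq> natvecs" "F \<subseteq> natvecs" shows "msum B (Nspan F) \<subseteq> natvecs"
proof
  fix x assume "x \<in> msum B (Nspan F)"
  then obtain b c where "b \<in> B" "c \<in> Nspan F" "x = b + c" unfolding msum_iff by blast
  moreover have "c \<in> natvecs" using Nspan_natvecs[OF assms(2) \<open>c \<in> Nspan F\<close>] .
  ultimately show "x \<in> natvecs" using assms(1) unfolding natvecs_def by auto
qed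


lemma pres_iter:
  assumes "\<forall>x\<in>X. x + p \<in> X" "x \<in> X" shows "x + smul (int k) p \<in> X"
proof (induction k)
  case 0 then show ?case using assms by simp
next
  case (Suc k)
  have eq: "x + smul (int (Suc k)) p = (x + smul (int k) p) + p"
    by (simp add: smul_add add.assoc)
  have "(x + smul (int k) p) + p \<in> X" using Suc assms(1) by blast
  then show ?case by (simp only: eq)
qed

lemma pres_natvecs:
  assumes "X \<subseteq> natvecs" "x \<in> X" "p \<in> preservants X" shows "p \<in> natvecs"
  unfolding natvecs_def
proof (intro CollectI allI)
  fix i
  show "0 \<le> p $ i"
  proof (rule ccontr)
    assume "\<not> 0 \<le> p $ i"
    hence pi: "p $ i \<le> -1" by simp
    have x0: "0 \<le> x $ i" using assms(1,2) unfolding natvecs_def by auto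
    let ?k = "nat (x $ i) + 1"
    have "x + smul (int ?k) p \<in> X" using pres_iter[of X p x ?k] assms unfolding preservants_def by auto
    hence "0 \<le> x $ i + int ?k * p $ i" using assms(1) unfolding natvecs_def by auto
    moreover have "int ?k * p $ i \<le> int ?k * (-1)" using pi by (intro mult_left_mono) auto
    ultimately show False using x0 by simp
  qed
qed

lemma pres_Nspan:
  assumes "\<forall>f\<in>F. f \<in> preservants X" "finite F" "x \<in> X"
  shows "x + (\<Sum>f\<in>F. smul (int (c f)) f) \<in> X"
  using assms(2,1,3)
proof (induction F arbitrary: x rule: finite_induct)
  case empty then show ?case by simp
next
  case (insert a F)
  have eq: "x + (\<Sum>f\<in>insert a F. smul (int (c f)) f) = (x + smul (int (c a)) a) + (\<Sum>f\<in>F. smul (int (c f)) f)"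
    using insert.hyps by (simp add: add.assoc)
  have "x + smul (int (c a)) a \<in> X"
    using pres_iter[of X a x "c a"] insert.prems unfolding preservants_def by auto
  hence "(x + smul (int (c a)) a) + (\<Sum>f\<in>F. smul (int (c f)) f) \<in> X" using insert by blast
  then show ?case by (simp only: eq)
qed

lemma Nspan_pres:
  assumes "X = msum B (Nspan F)" "v \<in> Nspan F" shows "v \<in> preservants X"
  unfolding preservants_def
proof (intro CollectI ballI)
  fix x assume "x \<in> X"
  then obtain b c where "b \<in> B" "c \<in> Nspan F" "x = b + c" unfolding assms(1) msum_iff by blast
  moreover have "c + v \<in> Nspan F" using Nspan_add assms(2) \<open>c \<in> Nspan F\<close> by blast
  ultimately show "x + v \<in> X" unfolding assms(1) msum_iff by (metis add.assoc)
qed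

lemma Nspan_mono:
  assumes "finite F'" "F \<subseteq> F'" shows "Nspan F \<subseteq> Nspan F'"
proof
  fix v assume "v \<in> Nspan F"
  then obtain c where v: "v = (\<Sum>f\<in>F. smul (int (c f)) f)" unfolding Nspan_def by auto
  have "v = (\<Sum>f\<in>F'. smul (int ((\<lambda>f. if f \<in> F then c f else 0) f)) f)"
    unfolding v by (rule sum.mono_neutral_cong_left) (use assms in auto)
  then show "v \<in> Nspan F'" using NspanI[where F=F' and c="\<lambda>f. if f \<in> F then c f else 0"] by simp
qed

lemma cond23:
  "(\<forall>b\<in>B. \<forall>b'\<in>B. msum {b} (Nspan F) \<inter> msum {b'} (Nspan F) \<noteq> {})
   \<longleftrightarrow> (\<forall>b\<in>B. \<forall>b'\<in>B. b - b' \<in> Zspan F)"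
proof (intro iffI ballI)
  fix b b' assume H: "\<forall>b\<in>B. \<forall>b'\<in>B. msum {b} (Nspan F) \<inter> msum {b'} (Nspan F) \<noteq> {}"
    and "b \<in> B" "b' \<in> B"
  then obtain z where "z \<in> msum {b} (Nspan F)" "z \<in> msum {b'} (Nspan F)" by blast
  then obtain u v where "u \<in> Nspan F" "v \<in> Nspan F" "z = b + u" "z = b' + v" unfolding msum_iff by auto
  hence "b + u = b' + v" by simp
  then obtain u v where "u \<in> Nspan F" "v \<in> Nspan F" "b + u = b' + v" using \<open>u \<in> Nspan F\<close> \<open>v \<in> Nspan F\<close> by blast
  hence "b - b' = v - u" by (simp add: algebra_simps)
  then show "b - b' \<in> Zspan F" using Zspan_diff Nspan_Zspan \<open>u \<in> Nspan F\<close> \<open>v \<in> Nspan F\<close> by metis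
next
  fix b b' assume H: "\<forall>b\<in>B. \<forall>b'\<in>B. b - b' \<in> Zspan F" and "b \<in> B" "b' \<in> B"
  then obtain a d where "a \<in> Nspan F" "d \<in> Nspan F" "b - b' = a - d" using Zspan_split by blast
  hence "b + d = b' + a" by (simp add: algebra_simps)
  hence "b + d \<in> msum {b'} (Nspan F)"
    using \<open>a \<in> Nspan F\<close> unfolding msum_iff by blast
  moreover have "b + d \<in> msum {b} (Nspan F)"
    using \<open>d \<in> Nspan F\<close> unfolding msum_iff by blast
  ultimately have "b + d \<in> msum {b} (Nspan F) \<inter> msum {b'} (Nspan F)" by blast
  then show "msum {b} (Nspan F) \<inter> msum {b'} (Nspan F) \<noteq> {}" by blast
qed


lemma incseq_sub_nat:
  fixes u :: "nat \<Rightarrow> nat" shows "\<exists>g. strict_mono g \<and> incseq (\<lambda>k. u (g k))"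
proof -
  obtain f where f: "strict_mono f" "monoseq (\<lambda>n. u (f n))" using seq_monosub by blast
  show ?thesis
  proof (cases "incseq (\<lambda>n. u (f n))")
    case True then show ?thesis using f by blast
  next
    case False
    hence dec: "decseq (\<lambda>n. u (f n))" using f(2) unfolding monoseq_iff by blast
    define m where "m = (LEAST x. x \<in> range (\<lambda>n. u (f n)))"
    have "m \<in> range (\<lambda>n. u (f n))" unfolding m_def by (rule LeastI) blast
    then obtain k0 where k0: "u (f k0) = m" by auto
    have const: "u (f (k + k0)) = m" for k
    proof -
      have "u (f (k + k0)) \<le> u (f k0)" using dec unfolding decseq_def by simp
      moreover have "m \<le> u (f (k + k0))" unfolding m_def by (rule Least_le) blast
      ultimately show ?thesis using k0 by simp
    qed
    have "strict_mono (\<lambda>k. f (k + k0))" using f(1) unfolding strict_mono_def by simp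
    moreover have "incseq (\<lambda>k. u (f (k + k0)))" unfolding incseq_def using const by simp
    ultimately show ?thesis by blast
  qed
qed

lemma incseq_sub_multi:
  fixes t :: "'i \<Rightarrow> nat \<Rightarrow> nat"
  assumes "finite I"
  shows "\<exists>g. strict_mono g \<and> (\<forall>i\<in>I. incseq (\<lambda>k. t i (g k)))"
  using assms
proof (induction I rule: finite_induct)
  case empty then show ?case by (rule exI[of _ id]) (simp add: strict_mono_def)
next
  case (insert a I)
  then obtain g where g: "strict_mono g" "\<forall>i\<in>I. incseq (\<lambda>k. t i (g k))" by blast
  obtain h where h: "strict_mono h" "incseq (\<lambda>k. t a (g (h k)))" using incseq_sub_nat[of "\<lambda>k. t a (g k)"] by blast
  have "strict_mono (g \<circ> h)" using g(1) h(1) by (rule strict_mono_o)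
  moreover have "\<forall>i\<in>insert a I. incseq (\<lambda>k. t i ((g \<circ> h) k))"
  proof
    fix i assume "i \<in> insert a I"
    then show "incseq (\<lambda>k. t i ((g \<circ> h) k))"
    proof
      assume "i = a" then show ?thesis using h by simp
    next
      assume "i \<in> I"
      then have "incseq (\<lambda>k. t i (g k))" using g by blast
      moreover have "mono h" using h(1) by (rule strict_mono_mono)
      ultimately show ?thesis unfolding incseq_def mono_def by simp
    qed
  qed
  ultimately show ?case by blast
qed


lemma Nspan_mem: "finite F \<Longrightarrow> u \<in> F \<Longrightarrow> u \<in> Nspan F"
proof -
  assume "finite F" "u \<in> F"
  have "(\<Sum>f\<in>F. smul (int ((\<lambda>f. if f = u then 1 else 0) f)) f) = (\<Sum>f\<in>F. if f = u then u else 0)"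
    by (rule sum.cong) auto
  also have "\<dots> = u" using \<open>finite F\<close> \<open>u \<in> F\<close> by simp
  finally show ?thesis using NspanI[where F=F and c="\<lambda>f. if f = u then 1 else 0"] by simp
qed

lemma B_sub_X: "X = msum B (Nspan F) \<Longrightarrow> B \<subseteq> X"
proof
  fix b assume "X = msum B (Nspan F)" "b \<in> B"
  moreover have "b + 0 \<in> msum B (Nspan F)" using Nspan_0[of F] \<open>b \<in> B\<close> unfolding msum_iff by blast
  ultimately show "b \<in> X" by simp
qed

lemma dir_to_3:
  assumes fin: "finite B" "finite F" and nat: "B \<subseteq> natvecs" "F \<subseteq> natvecs"
    and X: "X = msum B (Nspan F)"
    and dir: "\<forall>x\<in>X. \<forall>y\<in>X. \<exists>z\<in>X. leP (preservants X) x z \<and> leP (preservants X) y z"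
  shows "\<exists>B F. finite B \<and> finite F \<and> B \<subseteq> natvecs \<and> F \<subseteq> natvecs \<and> X = msum B (Nspan F)
              \<and> (\<forall>b\<in>B. \<forall>b'\<in>B. b - b' \<in> Zspan F)"
proof -
  let ?P = "preservants X"
  have BX: "B \<subseteq> X" using X by (rule B_sub_X)
  have Xnat: "X \<subseteq> natvecs" using msum_natvecs[OF nat] X by simp
  define z where "z b b' = (SOME z. z \<in> X \<and> z - b \<in> ?P \<and> z - b' \<in> ?P)" for b b'
  have z: "z b b' \<in> X \<and> z b b' - b \<in> ?P \<and> z b b' - b' \<in> ?P" if "b \<in> B" "b' \<in> B" for b b'
  proof -
    have "\<exists>z. z \<in> X \<and> z - b \<in> ?P \<and> z - b' \<in> ?P"
      using dir that BX unfolding leP_def by blast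
    then show ?thesis unfolding z_def by (rule someI_ex)
  qed
  define G where "G = (\<lambda>(b, b'). z b b' - b) ` (B \<times> B) \<union> (\<lambda>(b, b'). z b b' - b') ` (B \<times> B)"
  define F' where "F' = F \<union> G"
  have finF': "finite F'" unfolding F'_def G_def using fin by auto
  have GP: "G \<subseteq> ?P" unfolding G_def using z by auto
  have GN: "G \<subseteq> natvecs"
  proof
    fix g assume "g \<in> G"
    then obtain b where "b \<in> B" unfolding G_def by auto
    then show "g \<in> natvecs" using pres_natvecs[OF Xnat, of b g] BX GP \<open>g \<in> G\<close> by auto
  qed
  have F'N: "F' \<subseteq> natvecs" unfolding F'_def using GN nat by auto
  have F'P: "\<forall>f\<in>F'. f \<in> ?P"
  proof
    fix f assume "f \<in> F'"
    then show "f \<in> ?P"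
    proof (cases "f \<in> F")
      case True
      then show ?thesis using Nspan_pres[OF X Nspan_mem[OF fin(2) True]] by simp
    next
      case False then show ?thesis using \<open>f \<in> F'\<close> GP unfolding F'_def by auto
    qed
  qed
  have XF': "X = msum B (Nspan F')"
  proof
    show "X \<subseteq> msum B (Nspan F')"
    proof
      fix x assume "x \<in> X"
      then obtain b v where "b \<in> B" "v \<in> Nspan F" "x = b + v" unfolding X msum_iff by blast
      moreover have "v \<in> Nspan F'" using Nspan_mono[OF finF', of F] \<open>v \<in> Nspan F\<close> unfolding F'_def by blast
      ultimately show "x \<in> msum B (Nspan F')" unfolding msum_iff by blast
    qed
  next
    show "msum B (Nspan F') \<subseteq> X"
    proof
      fix x assume "x \<in> msum B (Nspan F')"
      then obtain b v where "b \<in> B" "v \<in> Nspan F'" "x = b + v" unfolding msum_iff by blast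
      then obtain c where "v = (\<Sum>f\<in>F'. smul (int (c f)) f)" unfolding Nspan_def by blast
      then show "x \<in> X" using pres_Nspan[OF F'P finF', of b c] \<open>b \<in> B\<close> BX \<open>x = b + v\<close> by auto
    qed
  qed
  have "\<forall>b\<in>B. \<forall>b'\<in>B. b - b' \<in> Zspan F'"
  proof (intro ballI)
    fix b b' assume "b \<in> B" "b' \<in> B"
    have "z b b' - b' \<in> F'" "z b b' - b \<in> F'" unfolding F'_def G_def using \<open>b \<in> B\<close> \<open>b' \<in> B\<close> by force+
    hence "(z b b' - b') - (z b b' - b) \<in> Zspan F'" using Zspan_mem[OF finF'] Zspan_diff by blast
    then show "b - b' \<in> Zspan F'" by simp
  qed
  then show ?thesis using fin(1) finF' nat(1) F'N XF' by blast
qed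


lemma from_2:
  assumes fin: "finite B" "finite F" and nat: "B \<subseteq> natvecs" "F \<subseteq> natvecs"
    and X: "X = msum B (Nspan F)"
    and c2: "\<forall>b\<in>B. \<forall>b'\<in>B. msum {b} (Nspan F) \<inter> msum {b'} (Nspan F) \<noteq> {}"
  shows "directed_hybridlinear X"
proof (cases "X = {}")
  case True then show ?thesis unfolding directed_hybridlinear_def directed_wqo_on_def by simp
next
  case False
  then obtain x0 where x0: "x0 \<in> X" by blast
  let ?P = "preservants X"
  let ?le = "leP ?P"
  have Xnat: "X \<subseteq> natvecs" using msum_natvecs[OF nat] X by simp
  have PN: "?P \<subseteq> natvecs" using pres_natvecs[OF Xnat x0] by blast
  have NP: "Nspan F \<subseteq> ?P" using Nspan_pres[OF X] by blast
  have antisym: "x = y" if "?le x y" "?le y x" for x y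
  proof -
    have "y - x \<in> natvecs" "x - y \<in> natvecs" using that PN unfolding leP_def by auto
    then show ?thesis unfolding natvecs_def by (auto simp: vec_eq_iff intro: antisym)
  qed
  have wfR: "wf {(x, y). x \<in> X \<and> y \<in> X \<and> ?le x y \<and> \<not> ?le y x}"
  proof (rule wf_subset[OF wf_measure[of "\<lambda>x. nat (\<Sum>i\<in>UNIV. x $ i)"]])
    show "{(x, y). x \<in> X \<and> y \<in> X \<and> ?le x y \<and> \<not> ?le y x} \<subseteq> measure (\<lambda>x. nat (\<Sum>i\<in>UNIV. x $ i))"
    proof
      fix q assume "q \<in> {(x, y). x \<in> X \<and> y \<in> X \<and> ?le x y \<and> \<not> ?le y x}"
      then obtain x y where q: "q = (x, y)" and H: "x \<in> X" "y \<in> X" "?le x y" "\<not> ?le y x" by blast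
      define p where "p = y - x"
      have pN: "p \<in> natvecs" using H(3) PN unfolding leP_def p_def by auto
      have "p \<noteq> 0" using H(3,4) unfolding p_def by auto
      then obtain j where j: "p $ j \<noteq> 0" by (auto simp: vec_eq_iff)
      have "0 < (\<Sum>i\<in>UNIV. p $ i)"
        using pN j by (intro sum_pos2[of UNIV j]) (auto simp: natvecs_def order_le_less)
      moreover have "(\<Sum>i\<in>UNIV. y $ i) = (\<Sum>i\<in>UNIV. x $ i) + (\<Sum>i\<in>UNIV. p $ i)"
        unfolding p_def sum.distrib[symmetric] by simp
      moreover have "0 \<le> (\<Sum>i\<in>UNIV. x $ i)" using H(1) Xnat unfolding natvecs_def by (auto intro!: sum_nonneg)
      ultimately have "nat (\<Sum>i\<in>UNIV. x $ i) < nat (\<Sum>i\<in>UNIV. y $ i)" by simp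
      then show "q \<in> measure (\<lambda>x. nat (\<Sum>i\<in>UNIV. x $ i))" using q by simp
    qed
  qed
  have dirX: "\<forall>x\<in>X. \<forall>y\<in>X. \<exists>z\<in>X. ?le x z \<and> ?le y z"
  proof (intro ballI)
    fix x y assume "x \<in> X" "y \<in> X"
    then obtain b u b' v where bu: "b \<in> B" "u \<in> Nspan F" "x = b + u" "b' \<in> B" "v \<in> Nspan F" "y = b' + v"
      unfolding X msum_iff by blast
    then obtain w where "w \<in> msum {b} (Nspan F)" "w \<in> msum {b'} (Nspan F)" using c2 by blast
    then obtain u0 v0 where w: "u0 \<in> Nspan F" "v0 \<in> Nspan F" "w = b + u0" "w = b' + v0"
      unfolding msum_iff by auto
    define z where "z = w + u + v"
    have "u0 + u + v \<in> Nspan F" using w bu Nspan_add by blast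
    hence "z \<in> X" unfolding X msum_iff z_def using w(3) bu(1) by (metis add.assoc)
    moreover have "z - x = u0 + v" unfolding z_def using w bu by (simp add: algebra_simps)
    moreover have "z - y = v0 + u" unfolding z_def using w bu by (simp add: algebra_simps)
    moreover have "u0 + v \<in> Nspan F" "v0 + u \<in> Nspan F" using w bu Nspan_add by blast+
    ultimately show "\<exists>z\<in>X. ?le x z \<and> ?le y z" unfolding leP_def using NP by (metis subsetD)
  qed
  have finM: "finite {m \<in> S. \<forall>y\<in>S. ?le y m \<longrightarrow> ?le m y}" if "S \<subseteq> X" for S
  proof (rule ccontr)
    let ?M = "{m \<in> S. \<forall>y\<in>S. ?le y m \<longrightarrow> ?le m y}"
    assume "infinite ?M"
    then obtain s :: "nat \<Rightarrow> _" where s: "inj s" "range s \<subseteq> ?M" using infinite_countable_subset by blast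
    have "\<forall>k. \<exists>b c. b \<in> B \<and> s k = b + (\<Sum>f\<in>F. smul (int (c f)) f)"
    proof
      fix k
      have "s k \<in> X" using s(2) that by blast
      then show "\<exists>b c. b \<in> B \<and> s k = b + (\<Sum>f\<in>F. smul (int (c f)) f)"
        unfolding X msum_iff Nspan_def by blast
    qed
    then obtain bb cc where bc: "\<And>k. bb k \<in> B" "\<And>k. s k = bb k + (\<Sum>f\<in>F. smul (int (cc k f)) f)"
      by metis
    have "finite (bb ` UNIV)" using bc(1) fin(1) by (meson finite_subset image_subsetI)
    then obtain k0 where "infinite {k \<in> UNIV. bb k = bb k0}"
      using pigeonhole_infinite[of "UNIV :: nat set" bb] by auto
    then have K: "infinite {k. bb k = bb k0}" by simp
    define e where "e = enumerate {k. bb k = bb k0}"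
    have e1: "strict_mono e" unfolding e_def using K by (rule strict_mono_enumerate)
    have e2: "bb (e k) = bb k0" for k unfolding e_def using enumerate_in_set[OF K] by blast
    obtain g where g: "strict_mono g" "\<forall>f\<in>F. incseq (\<lambda>k. cc (e (g k)) f)"
      using incseq_sub_multi[OF fin(2), of "\<lambda>f k. cc (e k) f"] by blast
    define a where "a = e (g 0)"
    define b where "b = e (g 1)"
    have "a < b" unfolding a_def b_def using e1 g(1) by (simp add: strict_mono_def)
    hence "s a \<noteq> s b" using s(1) by (metis inj_eq less_irrefl)
    have cle: "cc a f \<le> cc b f" if "f \<in> F" for f
      using g(2) that unfolding a_def b_def incseq_def by auto
    have "s b - s a = (\<Sum>f\<in>F. smul (int (cc b f)) f) - (\<Sum>f\<in>F. smul (int (cc a f)) f)"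
      using bc(2)[of a] bc(2)[of b] e2 unfolding a_def b_def by simp
    also have "\<dots> = (\<Sum>f\<in>F. smul (int ((\<lambda>f. cc b f - cc a f) f)) f)"
      unfolding sum_subtractf[symmetric] smul_diff[symmetric]
      by (rule sum.cong) (auto simp: cle of_nat_diff)
    finally have "s b - s a \<in> Nspan F" using NspanI[where F=F and c="\<lambda>f. cc b f - cc a f"] by simp
    hence "?le (s a) (s b)" using NP unfolding leP_def by auto
    moreover have "s b \<in> ?M" "s a \<in> S" using s(2) by auto
    ultimately have "?le (s b) (s a)" by blast
    then have "s a = s b" using antisym \<open>?le (s a) (s b)\<close> by blast
    then show False using \<open>s a \<noteq> s b\<close> by blast
  qed
  show ?thesis unfolding directed_hybridlinear_def directed_wqo_on_def
    using wfR dirX finM by blast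
qed


theorem mainTheorem15:
  fixes X :: "(int ^ 'n::finite) set"
  assumes "hybridlinear X"
  shows "(directed_hybridlinear X \<longleftrightarrow>
           (\<exists>B F. finite B \<and> finite F \<and> B \<subseteq> natvecs \<and> F \<subseteq> natvecs \<and> X = msum B (Nspan F)
              \<and> (\<forall>b\<in>B. \<forall>b'\<in>B. msum {b} (Nspan F) \<inter> msum {b'} (Nspan F) \<noteq> {})))
       \<and> (directed_hybridlinear X \<longleftrightarrow>
           (\<exists>B F. finite B \<and> finite F \<and> B \<subseteq> natvecs \<and> F \<subseteq> natvecs \<and> X = msum B (Nspan F)
              \<and> (\<forall>b\<in>B. \<forall>b'\<in>B. b - b' \<in> Zspan F)))"
proof -
  obtain B F where BF: "finite B" "finite F" "B \<subseteq> natvecs" "F \<subseteq> natvecs" "X = msum B (Nspan F)"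
    using assms unfolding hybridlinear_def by blast
  let ?R2 = "\<exists>B F. finite B \<and> finite F \<and> B \<subseteq> natvecs \<and> F \<subseteq> natvecs \<and> X = msum B (Nspan F)
              \<and> (\<forall>b\<in>B. \<forall>b'\<in>B. msum {b} (Nspan F) \<inter> msum {b'} (Nspan F) \<noteq> {})"
  let ?R3 = "\<exists>B F. finite B \<and> finite F \<and> B \<subseteq> natvecs \<and> F \<subseteq> natvecs \<and> X = msum B (Nspan F)
              \<and> (\<forall>b\<in>B. \<forall>b'\<in>B. b - b' \<in> Zspan F)"
  have e23: "?R2 \<longleftrightarrow> ?R3"
  proof
    assume ?R2
    then obtain B F where H: "finite B" "finite F" "B \<subseteq> natvecs" "F \<subseteq> natvecs" "X = msum B (Nspan F)"
      "\<forall>b\<in>B. \<forall>b'\<in>B. msum {b} (Nspan F) \<inter> msum {b'} (Nspan F) \<noteq> {}" by blast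
    then have "\<forall>b\<in>B. \<forall>b'\<in>B. b - b' \<in> Zspan F" using cond23[of B F] by simp
    then show ?R3 using H(1-5) by blast
  next
    assume ?R3
    then obtain B F where H: "finite B" "finite F" "B \<subseteq> natvecs" "F \<subseteq> natvecs" "X = msum B (Nspan F)"
      "\<forall>b\<in>B. \<forall>b'\<in>B. b - b' \<in> Zspan F" by blast
    then have "\<forall>b\<in>B. \<forall>b'\<in>B. msum {b} (Nspan F) \<inter> msum {b'} (Nspan F) \<noteq> {}" using cond23[of B F] by simp
    then show ?R2 using H(1-5) by blast
  qed
  have d3: "directed_hybridlinear X \<Longrightarrow> ?R3"
    using dir_to_3[OF BF] unfolding directed_hybridlinear_def directed_wqo_on_def by blast
  have d2: "?R2 \<Longrightarrow> directed_hybridlinear X"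
  proof -
    assume ?R2
    then obtain B F where H: "finite B" "finite F" "B \<subseteq> natvecs" "F \<subseteq> natvecs" "X = msum B (Nspan F)"
      "\<forall>b\<in>B. \<forall>b'\<in>B. msum {b} (Nspan F) \<inter> msum {b'} (Nspan F) \<noteq> {}" by blast
    then show ?thesis by (rule from_2)
  qed
  have i3: "directed_hybridlinear X \<longleftrightarrow> ?R3"
  proof
    assume "directed_hybridlinear X" then show ?R3 by (rule d3)
  next
    assume ?R3 then have ?R2 by (rule e23[THEN iffD2])
    then show "directed_hybridlinear X" by (rule d2)
  qed
  have i2: "directed_hybridlinear X \<longleftrightarrow> ?R2" by (rule trans[OF i3 e23[symmetric]])
  show ?thesis using i2 i3 by (rule conjI)
qed

end
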